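(* Let $E$ be a Banach space, $\Omega\subset\mathbb{R}^d$ open, $k\in\mathbb{N}_0$ and $0<\gamma\le1$. Let $(f_\iota)_{\iota\in I}$ be a bounded net in $\mathcal{C}^{k,\gamma}_{loc}(\Omega,E)$, and suppose either (i) $\lim_\iota f_\iota(x)$ exists for all $x$ in a dense subset $U\subset\Omega$, or (ii) $k\ge1$, $\Omega$ is connected, $\lim_\iota(\partial^{e_n})^Ef_\iota(x)$ exists for all $1\le n\le d$ and all $x$ in a dense subset $U\subset\Omega$, and there is $x_0\in\Omega$ such that $\lim_\iota f_\iota(x_0)$ exists. Then there is $f\in\mathcal{C}^{k,\gamma}_{loc}(\Omega,E)$ such that $(f_\iota)_{\iota\in I}$ converges to $f$ in $(\mathcal{C}^k(\Omega,E),\tau_{\mathcal{C}^k})$.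
   Context: $E$ is a Banach space over $\mathbb{K}\in\{\mathbb{R},\mathbb{C}\}$ with norm $\|\cdot\|$. $\mathcal{C}^{k,\gamma}_{loc}(\Omega,E)$ is the space of $k$-times continuously partially differentiable $f\colon\Omega\to E$ such that for each compact $K\subset\Omega$ the seminorm $|f|_K:=\max\bigl(\sup_{x\in K,|\beta|\le k}\|(\partial^\beta)^Ef(x)\|,\ \sup_{|\beta|=k}\sup_{x\ne y\in K}\frac{\|(\partial^\beta)^Ef(x)-(\partial^\beta)^Ef(y)\|}{|x-y|^\gamma}\bigr)$ is finite; a net is bounded if $\sup_\iota|f_\iota|_K<\infty$ for every compact $K$. $\tau_{\mathcal{C}^k}$ is the topology of uniform convergence of all partial derivatives of order $\le k$ on compact subsets of $\Omega$ (seminorms $\sup_{x\in K,|\beta|\le m}\|(\partial^\beta)^Ef(x)\|$, $K$ compact, $m\le k$). *)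

theory Defs
  imports "HOL-Analysis.Analysis"
begin

text \<open>Partial derivative in the direction of the i-th standard basis vector e_i of R^d
  (here R^d is modelled as real^'n, d = CARD('n)).\<close>
definition pdiff :: "'n::finite \<Rightarrow> (real^'n \<Rightarrow> 'e::real_normed_vector) \<Rightarrow> real^'n \<Rightarrow> 'e" where
  "pdiff i f x = vector_derivative (\<lambda>t. f (x + t *\<^sub>R axis i 1)) (at 0)"

text \<open>Iterated partial derivative along a list of directions (a multi-index of order = length).\<close>
fun pdiffs :: "'n::finite list \<Rightarrow> (real^'n \<Rightarrow> 'e::real_normed_vector) \<Rightarrow> real^'n \<Rightarrow> 'e" where
  "pdiffs [] f = f"
| "pdiffs (i # is) f = pdiff i (pdiffs is f)"

fun Ck_on :: "nat \<Rightarrow> (real^'n::finite) set \<Rightarrow> (real^'n \<Rightarrow> 'e::real_normed_vector) \<Rightarrow> bool" where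
  "Ck_on 0 \<Omega> f = continuous_on \<Omega> f"
| "Ck_on (Suc m) \<Omega> f = (continuous_on \<Omega> f \<and>
      (\<forall>i. \<forall>x\<in>\<Omega>. (\<lambda>t. f (x + t *\<^sub>R axis i 1)) differentiable (at 0)) \<and>
      (\<forall>i. Ck_on m \<Omega> (pdiff i f)))"

definition holder_bound :: "nat \<Rightarrow> real \<Rightarrow> (real^'n::finite) set \<Rightarrow> (real^'n \<Rightarrow> 'e::real_normed_vector) \<Rightarrow> real \<Rightarrow> bool" where
  "holder_bound k \<gamma> K f C \<longleftrightarrow>
     (\<forall>\<beta> x. length \<beta> \<le> k \<longrightarrow> x \<in> K \<longrightarrow> norm (pdiffs \<beta> f x) \<le> C) \<and>
     (\<forall>\<beta> x y. length \<beta> = k \<longrightarrow> x \<in> K \<longrightarrow> y \<in> K \<longrightarrow> x \<noteq> y \<longrightarrow>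
        norm (pdiffs \<beta> f x - pdiffs \<beta> f y) \<le> C * dist x y powr \<gamma>)"

definition Ck_gamma_loc :: "nat \<Rightarrow> real \<Rightarrow> (real^'n::finite) set \<Rightarrow> (real^'n \<Rightarrow> 'e::real_normed_vector) \<Rightarrow> bool" where
  "Ck_gamma_loc k \<gamma> \<Omega> f \<longleftrightarrow> Ck_on k \<Omega> f \<and>
     (\<forall>K. compact K \<and> K \<subseteq> \<Omega> \<longrightarrow> (\<exists>C. holder_bound k \<gamma> K f C))"

definition directed_set :: "'i set \<Rightarrow> ('i \<Rightarrow> 'i \<Rightarrow> bool) \<Rightarrow> bool" where
  "directed_set I R \<longleftrightarrow> I \<noteq> {} \<and> (\<forall>a\<in>I. R a a) \<and>
     (\<forall>a\<in>I. \<forall>b\<in>I. \<forall>c\<in>I. R a b \<longrightarrow> R b c \<longrightarrow> R a c) \<and>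
     (\<forall>a\<in>I. \<forall>b\<in>I. \<exists>c\<in>I. R a c \<and> R b c)"

definition net_filter :: "'i set \<Rightarrow> ('i \<Rightarrow> 'i \<Rightarrow> bool) \<Rightarrow> 'i filter" where
  "net_filter I R = (INF a\<in>I. principal {b\<in>I. R a b})"

end

theory Submission
  imports Defs
begin

lemma dir_ne: "directed_set I R \<Longrightarrow> I \<noteq> {}" unfolding directed_set_def by blast
lemma dir_refl: "directed_set I R \<Longrightarrow> a \<in> I \<Longrightarrow> R a a" unfolding directed_set_def by blast
lemma dir_trans: "directed_set I R \<Longrightarrow> a\<in>I \<Longrightarrow> b\<in>I \<Longrightarrow> c\<in>I \<Longrightarrow> R a b \<Longrightarrow> R b c \<Longrightarrow> R a c"
  unfolding directed_set_def by blast
lemma dir_up: "directed_set I R \<Longrightarrow> a\<in>I \<Longrightarrow> b\<in>I \<Longrightarrow> \<exists>c\<in>I. R a c \<and> R b c"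
  unfolding directed_set_def by blast

lemma ev_net:
  assumes "directed_set I R"
  shows "eventually P (net_filter I R) \<longleftrightarrow> (\<exists>a\<in>I. \<forall>b\<in>I. R a b \<longrightarrow> P b)"
proof -
  note ne = dir_ne[OF assms] and tr = dir_trans[OF assms] and up = dir_up[OF assms]
  define G where "G = (\<lambda>a. principal {b\<in>I. R a b})"
  have G: "\<exists>x\<in>I. G x \<le> inf (G a) (G b)" if ab: "a \<in> I" "b \<in> I" for a b
  proof -
    obtain c where c: "c \<in> I" "R a c" "R b c" using up[OF ab] by blast
    have "{x\<in>I. R c x} \<subseteq> {x\<in>I. R a x} \<inter> {x\<in>I. R b x}"
      using tr[OF ab(1) c(1)] tr[OF ab(2) c(1)] c by blast
    then have "G c \<le> inf (G a) (G b)" unfolding G_def inf_principal by simp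
    then show ?thesis using c by blast
  qed
  have "eventually P (INF a\<in>I. G a) \<longleftrightarrow> (\<exists>a\<in>I. eventually P (G a))"
    by (rule eventually_INF_base[OF ne G])
  then show ?thesis unfolding net_filter_def G_def eventually_principal by auto
qed

lemma net_ne:
  assumes "directed_set I R"
  shows "net_filter I R \<noteq> bot"
proof
  assume "net_filter I R = bot"
  then have "eventually (\<lambda>_. False) (net_filter I R)" by simp
  then have "\<exists>a\<in>I. \<forall>b\<in>I. R a b \<longrightarrow> False" unfolding ev_net[OF assms] .
  then obtain a where a: "a \<in> I" "\<forall>b\<in>I. R a b \<longrightarrow> False" by blast
  have "R a a" using dir_refl[OF assms a(1)] .
  then show False using a by blast
qed

lemma net_in:
  assumes "directed_set I R"
  shows "eventually (\<lambda>b. b \<in> I) (net_filter I R)"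
proof -
  obtain a where "a \<in> I" using dir_ne[OF assms] by blast
  then show ?thesis unfolding ev_net[OF assms] by blast
qed

lemma net_cauchy_conv:
  fixes X :: "'i \<Rightarrow> 'e::banach"
  assumes d: "directed_set I R"
    and C: "\<forall>\<epsilon>>0. \<exists>a\<in>I. \<forall>b\<in>I. \<forall>c\<in>I. R a b \<longrightarrow> R a c \<longrightarrow> dist (X b) (X c) \<le> \<epsilon>"
  shows "\<exists>l. (X \<longlongrightarrow> l) (net_filter I R)"
proof -
  have "cauchy_filter (filtermap X (net_filter I R))"
  proof (subst cauchy_filter_metric_filtermap, intro allI impI)
    fix e :: real assume "e > 0"
    then have "e/2 > 0" by simp
    then obtain a where a: "a \<in> I" "\<forall>b\<in>I. \<forall>c\<in>I. R a b \<longrightarrow> R a c \<longrightarrow> dist (X b) (X c) \<le> e/2"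
      using C by blast
    have "eventually (\<lambda>b. b \<in> I \<and> R a b) (net_filter I R)"
      unfolding ev_net[OF d] using a(1) by blast
    moreover have "\<forall>x y. (x \<in> I \<and> R a x) \<and> (y \<in> I \<and> R a y) \<longrightarrow> dist (X x) (X y) < e"
    proof (intro allI impI)
      fix x y assume "(x \<in> I \<and> R a x) \<and> (y \<in> I \<and> R a y)"
      then have "dist (X x) (X y) \<le> e/2" using a(2) by blast
      then show "dist (X x) (X y) < e" using \<open>e>0\<close> by linarith
    qed
    ultimately show "\<exists>P. eventually P (net_filter I R) \<and> (\<forall>x y. P x \<and> P y \<longrightarrow> dist (X x) (X y) < e)"
      by blast
  qed
  moreover have "filtermap X (net_filter I R) \<noteq> bot"
    using net_ne[OF d] by (simp add: filtermap_bot_iff)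
  ultimately obtain c where "filtermap X (net_filter I R) \<le> nhds c"
    using cauchy_filter_complete_converges[OF _ complete_UNIV, of "filtermap X (net_filter I R)"] by auto
  then show ?thesis unfolding filterlim_def by blast
qed

lemma line_shift:
  fixes h :: "real^'n \<Rightarrow> 'e::real_normed_vector"
  assumes "((\<lambda>t. h (y + t0 *\<^sub>R v + t *\<^sub>R v)) has_vector_derivative D) (at 0)"
  shows "((\<lambda>t. h (y + t *\<^sub>R v)) has_vector_derivative D) (at t0)"
proof -
  have 1: "((\<lambda>t. t - t0) has_vector_derivative 1) (at t0)"
    unfolding has_vector_derivative_diff_const by (rule has_vector_derivative_id)
  have 2: "((\<lambda>t. h (y + t0 *\<^sub>R v + t *\<^sub>R v)) has_vector_derivative D) (at ((\<lambda>t. t - t0) t0))"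
    using assms by simp
  have 3: "((\<lambda>t. h (y + t0 *\<^sub>R v + t *\<^sub>R v)) \<circ> (\<lambda>t. t - t0)) = (\<lambda>t. h (y + t *\<^sub>R v))"
  proof
    fix t
    have "y + t0 *\<^sub>R v + (t - t0) *\<^sub>R v = y + t *\<^sub>R v" by (simp add: algebra_simps)
    then show "((\<lambda>t. h (y + t0 *\<^sub>R v + t *\<^sub>R v)) \<circ> (\<lambda>t. t - t0)) t = h (y + t *\<^sub>R v)"
      by (simp add: add.assoc)
  qed
  show ?thesis using vector_diff_chain_at[OF 1 2] unfolding 3 by simp
qed

lemma mvt0:
  fixes \<phi> :: "real \<Rightarrow> 'e::real_normed_vector"
  assumes der: "\<And>t. t \<in> closed_segment 0 s \<Longrightarrow> (\<phi> has_vector_derivative \<phi>' t) (at t)"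
    and bd: "\<And>t. t \<in> closed_segment 0 s \<Longrightarrow> norm (\<phi>' t - L) \<le> B"
  shows "norm (\<phi> s - \<phi> 0 - s *\<^sub>R L) \<le> \<bar>s\<bar> * B"
proof -
  define \<psi> where "\<psi> = (\<lambda>t. \<phi> t - t *\<^sub>R L)"
  have lin: "((\<lambda>t. t *\<^sub>R L) has_vector_derivative L) F" for F
    unfolding has_vector_derivative_def by (rule bounded_linear_scaleR_left[THEN bounded_linear.has_derivative]) 
      (rule has_derivative_ident)
  have d: "(\<psi> has_derivative (\<lambda>h. h *\<^sub>R (\<phi>' t - L))) (at t within closed_segment 0 s)"
    if "t \<in> closed_segment 0 s" for t
  proof -
    have "(\<psi> has_vector_derivative (\<phi>' t - L)) (at t)"
      unfolding \<psi>_def by (rule has_vector_derivative_diff[OF der[OF that] lin])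
    then show ?thesis unfolding has_vector_derivative_def by (rule has_derivative_at_withinI)
  qed
  have o: "onorm (\<lambda>h. h *\<^sub>R (\<phi>' t - L)) \<le> B" if "t \<in> closed_segment 0 s" for t
    using onorm_scaleR_left[OF bounded_linear_ident, of "\<phi>' t - L"] onorm_id[where 'a=real] bd[OF that] by simp
  have "norm (\<psi> s - \<psi> 0) \<le> B * norm (s - 0)"
    by (rule differentiable_bound[OF convex_closed_segment d o]) auto
  then show ?thesis unfolding \<psi>_def by (simp add: mult.commute algebra_simps)
qed

lemma staircase:
  fixes h :: "real^'n::finite \<Rightarrow> 'e::real_normed_vector"
  assumes der: "\<And>i z. z \<in> S \<Longrightarrow> ((\<lambda>t. h (z + t *\<^sub>R axis i 1)) has_vector_derivative D i z) (at 0)"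
    and bd: "\<And>i z. z \<in> S \<Longrightarrow> norm (D i z) \<le> B"
    and sub: "\<And>z. norm (z - x) \<le> norm (y - x) \<Longrightarrow> z \<in> S"
  shows "norm (h y - h x) \<le> B * (\<Sum>i\<in>UNIV. \<bar>y$i - x$i\<bar>)"
proof -
  define zz where "zz = (\<lambda>A. (\<chi> j. if j \<in> A then y$j else x$j))"
  have main: "norm (h (zz A) - h x) \<le> B * (\<Sum>i\<in>A. \<bar>y$i - x$i\<bar>)" if "finite A" for A
    using that
  proof (induction A rule: finite_induct)
    case empty
    have "zz {} = x" unfolding zz_def by (simp add: vec_eq_iff)
    then show ?case by simp
  next
    case (insert a A)
    define s where "s = y$a - x$a"
    define z where "z = zz A"
    have zi: "zz (insert a A) = z + s *\<^sub>R axis a 1"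
      unfolding z_def zz_def s_def using insert.hyps(2) by (auto simp: vec_eq_iff axis_def)
    have mem: "z + t *\<^sub>R axis a 1 \<in> S" if "t \<in> closed_segment 0 s" for t
    proof (rule sub)
      have ts: "\<bar>t\<bar> \<le> \<bar>s\<bar>" using that by (auto simp: closed_segment_eq_real_ivl split: if_splits)
      show "norm (z + t *\<^sub>R axis a 1 - x) \<le> norm (y - x)"
      proof (rule norm_le_componentwise_cart)
        fix j
        show "norm ((z + t *\<^sub>R axis a 1 - x) $ j) \<le> norm ((y - x) $ j)"
          using ts insert.hyps(2) unfolding z_def zz_def s_def by (auto simp: axis_def)
      qed
    qed
    have "norm (h (z + s *\<^sub>R axis a 1) - h (z + 0 *\<^sub>R axis a 1) - s *\<^sub>R 0) \<le> \<bar>s\<bar> * B"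
    proof (rule mvt0[where \<phi>' = "\<lambda>t. D a (z + t *\<^sub>R axis a 1)"])
      fix t assume t: "t \<in> closed_segment 0 s"
      show "((\<lambda>t. h (z + t *\<^sub>R axis a 1)) has_vector_derivative D a (z + t *\<^sub>R axis a 1)) (at t)"
        by (rule line_shift) (rule der[OF mem[OF t]])
      show "norm (D a (z + t *\<^sub>R axis a 1) - 0) \<le> B" using bd[OF mem[OF t]] by simp
    qed
    then have step: "norm (h (zz (insert a A)) - h z) \<le> \<bar>s\<bar> * B" unfolding zi by simp
    have "norm (h (zz (insert a A)) - h x) \<le> norm (h (zz (insert a A)) - h z) + norm (h z - h x)"
      using norm_triangle_ineq[of "h (zz (insert a A)) - h z" "h z - h x"] by simp
    also have "\<dots> \<le> \<bar>s\<bar> * B + B * (\<Sum>i\<in>A. \<bar>y$i - x$i\<bar>)"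
      using step insert.IH unfolding z_def by linarith
    also have "\<dots> = B * (\<Sum>i\<in>insert a A. \<bar>y$i - x$i\<bar>)"
      using insert.hyps unfolding s_def by (simp add: algebra_simps)
    finally show ?case .
  qed
  have "zz UNIV = y" unfolding zz_def by (simp add: vec_eq_iff)
  then show ?thesis using main[of UNIV] by simp
qed

lemma Ck_pdiffs:
  assumes "Ck_on m \<Omega> h" "length \<beta> \<le> m"
  shows "Ck_on (m - length \<beta>) \<Omega> (pdiffs \<beta> h)"
  using assms(2)
proof (induction \<beta>)
  case Nil
  then show ?case using assms(1) by simp
next
  case (Cons i \<beta>)
  then have IH: "Ck_on (m - length \<beta>) \<Omega> (pdiffs \<beta> h)" by simp
  have eq: "m - length \<beta> = Suc (m - length (i # \<beta>))" using Cons.prems by simp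
  from IH[unfolded eq] show ?case by simp
qed

lemma Ck_cont: "Ck_on m \<Omega> h \<Longrightarrow> continuous_on \<Omega> h"
  by (cases m) auto

lemma dir_ub:
  assumes d: "directed_set I R" and "finite A" "A \<subseteq> I"
  shows "\<exists>a\<in>I. \<forall>b\<in>A. R b a"
  using assms(2,3)
proof (induction A rule: finite_induct)
  case empty
  then show ?case using dir_ne[OF d] by blast
next
  case (insert x A)
  then obtain a where a: "a \<in> I" "\<forall>b\<in>A. R b a" by blast
  have x: "x \<in> I" using insert.prems by blast
  obtain c where c: "c \<in> I" "R a c" "R x c" using dir_up[OF d a(1) x] by blast
  have "\<forall>b\<in>insert x A. R b c"
  proof
    fix b assume b: "b \<in> insert x A"
    show "R b c"
    proof (cases "b = x")
      case True then show ?thesis using c by simp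
    next
      case False
      then have "b \<in> A" using b by simp
      then have "b \<in> I" "R b a" using a insert.prems by auto
      then show ?thesis using dir_trans[OF d _ a(1) c(1) _ c(2)] by blast
    qed
  qed
  then show ?case using c(1) by blast
qed

lemma cauchy_combine:
  assumes d: "directed_set I R" and J: "finite J"
    and P: "\<forall>j\<in>J. \<exists>a\<in>I. \<forall>b\<in>I. \<forall>c\<in>I. R a b \<longrightarrow> R a c \<longrightarrow> P j b c"
  shows "\<exists>a\<in>I. \<forall>b\<in>I. \<forall>c\<in>I. R a b \<longrightarrow> R a c \<longrightarrow> (\<forall>j\<in>J. P j b c)"
proof -
  obtain A where A: "\<forall>j\<in>J. A j \<in> I \<and> (\<forall>b\<in>I. \<forall>c\<in>I. R (A j) b \<longrightarrow> R (A j) c \<longrightarrow> P j b c)"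
  proof -
    from P have "\<forall>j\<in>J. \<exists>a. a \<in> I \<and> (\<forall>b\<in>I. \<forall>c\<in>I. R a b \<longrightarrow> R a c \<longrightarrow> P j b c)"
      by (simp add: Bex_def)
    from bchoice[OF this] show ?thesis using that by blast
  qed
  have "A ` J \<subseteq> I" using A by blast
  then obtain a where a: "a \<in> I" "\<forall>b\<in>A ` J. R b a" using dir_ub[OF d finite_imageI[OF J]] by blast
  have "\<forall>b\<in>I. \<forall>c\<in>I. R a b \<longrightarrow> R a c \<longrightarrow> (\<forall>j\<in>J. P j b c)"
  proof (intro ballI impI)
    fix b c j assume b: "b \<in> I" and c: "c \<in> I" and ab: "R a b" and ac: "R a c" and j: "j \<in> J"
    have Aj: "A j \<in> I" "R (A j) a" using A a j by auto
    have "R (A j) b" using dir_trans[OF d Aj(1) a(1) b Aj(2) ab] .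
    moreover have "R (A j) c" using dir_trans[OF d Aj(1) a(1) c Aj(2) ac] .
    ultimately show "P j b c" using A j b c by blast
  qed
  then show ?thesis using a(1) by blast
qed

lemma conv_cauchy:
  assumes d: "directed_set I R" and X: "(X \<longlongrightarrow> l) (net_filter I R)"
  shows "\<forall>\<epsilon>>0. \<exists>a\<in>I. \<forall>b\<in>I. \<forall>c\<in>I. R a b \<longrightarrow> R a c \<longrightarrow> dist (X b) (X c) \<le> \<epsilon>"
proof (intro allI impI)
  fix e :: real assume "e > 0"
  then have "eventually (\<lambda>b. dist (X b) l < e/2) (net_filter I R)"
    using tendstoD[OF X, of "e/2"] by simp
  then obtain a where a: "a \<in> I" "\<forall>b\<in>I. R a b \<longrightarrow> dist (X b) l < e/2"
    unfolding ev_net[OF d] by blast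
  have "\<forall>b\<in>I. \<forall>c\<in>I. R a b \<longrightarrow> R a c \<longrightarrow> dist (X b) (X c) \<le> e"
  proof (intro ballI impI)
    fix b c assume "b \<in> I" "c \<in> I" "R a b" "R a c"
    then have "dist (X b) l < e/2" "dist (X c) l < e/2" using a by auto
    then show "dist (X b) (X c) \<le> e" using dist_triangle2[of "X b" "X c" l] by linarith
  qed
  then show "\<exists>a\<in>I. \<forall>b\<in>I. \<forall>c\<in>I. R a b \<longrightarrow> R a c \<longrightarrow> dist (X b) (X c) \<le> e"
    using a(1) by blast
qed

lemma lim_norm_le:
  assumes d: "directed_set I R" and X: "(X \<longlongrightarrow> l) (net_filter I R)"
    and ev: "\<forall>b\<in>I. norm (X b) \<le> C"
  shows "norm l \<le> C"
proof (rule tendsto_upperbound[OF tendsto_norm[OF X]])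
  show "\<forall>\<^sub>F i in net_filter I R. norm (X i) \<le> C"
    using net_in[OF d] by eventually_elim (use ev in blast)
  show "\<not> trivial_limit (net_filter I R)" using net_ne[OF d] by simp
qed

lemma cball_thicken:
  fixes K :: "(real^'n::finite) set"
  assumes "compact K" "K \<subseteq> \<Omega>" "open \<Omega>"
  obtains \<delta> K2 where "0 < \<delta>" "\<delta> \<le> 1" "compact K2" "K2 \<subseteq> \<Omega>" "\<And>x. x \<in> K \<Longrightarrow> cball x \<delta> \<subseteq> K2"
proof -
  obtain e where e: "0 < e" "\<And>x. x \<in> K \<Longrightarrow> \<exists>G\<in>{\<Omega>}. ball x e \<subseteq> G"
    using Heine_Borel_lemma[OF assms(1), of "{\<Omega>}"] assms by auto
  define \<delta> where "\<delta> = min (e/2) 1"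
  have dpos: "0 < \<delta>" and d1: "\<delta> \<le> 1" using e(1) unfolding \<delta>_def by auto
  have sub: "cball x \<delta> \<subseteq> \<Omega>" if "x \<in> K" for x
  proof -
    have "cball x \<delta> \<subseteq> ball x e" using e(1) unfolding \<delta>_def by (auto simp: subset_iff)
    then show ?thesis using e(2)[OF that] by auto
  qed
  define K2 where "K2 = {x + y |x y. x \<in> K \<and> y \<in> cball 0 \<delta>}"
  have "compact K2" unfolding K2_def by (rule compact_sums[OF assms(1) compact_cball])
  moreover have cb: "cball x \<delta> \<subseteq> K2" if "x \<in> K" for x
  proof
    fix z assume "z \<in> cball x \<delta>"
    then have "z - x \<in> cball 0 \<delta>" by (simp add: dist_norm norm_minus_commute)
    moreover have "z = x + (z - x)" by simp
    ultimately show "z \<in> K2" unfolding K2_def using that by blast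
  qed
  moreover have "K2 \<subseteq> \<Omega>"
  proof
    fix z assume "z \<in> K2"
    then obtain x y where "z = x + y" "x \<in> K" "y \<in> cball 0 \<delta>" unfolding K2_def by blast
    then have "z \<in> cball x \<delta>" by (simp add: dist_norm)
    then show "z \<in> \<Omega>" using sub \<open>x \<in> K\<close> by blast
  qed
  ultimately show ?thesis using that dpos d1 by blast
qed

lemma sum_abs_le_card_norm:
  fixes x y :: "real^'n::finite"
  shows "(\<Sum>i\<in>UNIV. \<bar>y$i - x$i\<bar>) \<le> real CARD('n) * dist x y"
proof -
  have "(\<Sum>i\<in>UNIV. \<bar>y$i - x$i\<bar>) \<le> (\<Sum>i\<in>(UNIV::'n set). dist x y)"
  proof (rule sum_mono)
    fix i
    have "\<bar>(y - x)$i\<bar> \<le> norm (y - x)" by (rule component_le_norm_cart)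
    then show "\<bar>y$i - x$i\<bar> \<le> dist x y" by (simp add: dist_norm norm_minus_commute)
  qed
  then show ?thesis by simp
qed

lemma le_powr_small: "0 \<le> d \<Longrightarrow> d \<le> 1 \<Longrightarrow> 0 < \<gamma> \<Longrightarrow> \<gamma> \<le> 1 \<Longrightarrow> d \<le> d powr \<gamma>"
  for d \<gamma> :: real
  using powr_mono'[of \<gamma> 1 d] by (cases "d = 0") auto

lemma tri4:
  fixes pb pc qb qc db dc :: "'e::real_normed_vector"
  shows "norm (t *\<^sub>R (db - dc)) \<le> norm (pb - pc) + norm (qb - qc) + norm (pb - qb - t *\<^sub>R db) + norm (pc - qc - t *\<^sub>R dc)"
proof -
  have eq: "t *\<^sub>R (db - dc) = ((pb - pc) - (qb - qc)) + ((pc - qc - t *\<^sub>R dc) - (pb - qb - t *\<^sub>R db))"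
    by (simp add: algebra_simps)
  have "norm (t *\<^sub>R (db - dc)) \<le> norm ((pb - pc) - (qb - qc)) + norm ((pc - qc - t *\<^sub>R dc) - (pb - qb - t *\<^sub>R db))"
    unfolding eq by (rule norm_triangle_ineq)
  also have "\<dots> \<le> (norm (pb - pc) + norm (qb - qc)) + (norm (pc - qc - t *\<^sub>R dc) + norm (pb - qb - t *\<^sub>R db))"
    by (intro add_mono norm_triangle_ineq4)
  finally show ?thesis by simp
qed

lemma small_powr:
  fixes M e \<gamma> :: real
  assumes "0 \<le> M" "0 < e" "0 < \<gamma>" "0 \<le> t" "t \<le> (e / (M + 1)) powr (1/\<gamma>)"
  shows "M * t powr \<gamma> \<le> e"
proof -
  have "t powr \<gamma> \<le> ((e / (M + 1)) powr (1/\<gamma>)) powr \<gamma>"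
    using assms by (intro powr_mono2) auto
  also have "\<dots> = e / (M + 1)" using assms by (simp add: powr_powr)
  finally have "M * t powr \<gamma> \<le> M * (e / (M + 1))" using assms(1) by (intro mult_left_mono)
  also have "\<dots> \<le> e" using assms(1,2) by (simp add: field_simps)
  finally show ?thesis .
qed

lemma small_powr_pos:
  fixes e \<gamma> M :: real
  assumes "0 < e" "0 \<le> M"
  shows "0 < (e / (M + 1)) powr (1/\<gamma>)"
  using assms by simp

lemma cauchy_two:
  assumes d: "directed_set I R"
    and P: "\<exists>a\<in>I. \<forall>b\<in>I. \<forall>c\<in>I. R a b \<longrightarrow> R a c \<longrightarrow> P b c"
    and Q: "\<exists>a\<in>I. \<forall>b\<in>I. \<forall>c\<in>I. R a b \<longrightarrow> R a c \<longrightarrow> Q b c"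
  shows "\<exists>a\<in>I. \<forall>b\<in>I. \<forall>c\<in>I. R a b \<longrightarrow> R a c \<longrightarrow> P b c \<and> Q b c"
proof -
  obtain a1 where a1: "a1 \<in> I" "\<forall>b\<in>I. \<forall>c\<in>I. R a1 b \<longrightarrow> R a1 c \<longrightarrow> P b c" using P by blast
  obtain a2 where a2: "a2 \<in> I" "\<forall>b\<in>I. \<forall>c\<in>I. R a2 b \<longrightarrow> R a2 c \<longrightarrow> Q b c" using Q by blast
  obtain a where a: "a \<in> I" "R a1 a" "R a2 a" using dir_up[OF d a1(1) a2(1)] by blast
  have "\<forall>b\<in>I. \<forall>c\<in>I. R a b \<longrightarrow> R a c \<longrightarrow> P b c \<and> Q b c"
  proof (intro ballI impI)
    fix b c assume b: "b \<in> I" and c: "c \<in> I" and ab: "R a b" and ac: "R a c"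
    have "R a1 b" using dir_trans[OF d a1(1) a(1) b a(2) ab] .
    moreover have "R a1 c" using dir_trans[OF d a1(1) a(1) c a(2) ac] .
    moreover have "R a2 b" using dir_trans[OF d a2(1) a(1) b a(3) ab] .
    moreover have "R a2 c" using dir_trans[OF d a2(1) a(1) c a(3) ac] .
    ultimately show "P b c \<and> Q b c" using a1(2) a2(2) b c by blast
  qed
  then show ?thesis using a(1) by blast
qed

locale hsetup =
  fixes \<Omega> :: "(real^'n::finite) set" and f :: "'i \<Rightarrow> real^'n \<Rightarrow> 'e::banach"
    and I :: "'i set" and R :: "'i \<Rightarrow> 'i \<Rightarrow> bool" and k :: nat and \<gamma> :: real
  assumes opn: "open \<Omega>" and gpos: "0 < \<gamma>" and gle: "\<gamma> \<le> 1" and dir: "directed_set I R"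
    and reg: "\<forall>\<iota>\<in>I. Ck_gamma_loc k \<gamma> \<Omega> (f \<iota>)"
    and bnd: "\<forall>K. compact K \<and> K \<subseteq> \<Omega> \<longrightarrow> (\<exists>C. \<forall>\<iota>\<in>I. holder_bound k \<gamma> K (f \<iota>) C)"
begin

lemma hCk: "\<iota> \<in> I \<Longrightarrow> length \<beta> \<le> k \<Longrightarrow> Ck_on (k - length \<beta>) \<Omega> (pdiffs \<beta> (f \<iota>))"
  using reg Ck_pdiffs unfolding Ck_gamma_loc_def by blast

lemma hcont: "\<iota> \<in> I \<Longrightarrow> length \<beta> \<le> k \<Longrightarrow> continuous_on \<Omega> (pdiffs \<beta> (f \<iota>))"
  using hCk Ck_cont by blast

lemma hder:
  assumes "\<iota> \<in> I" "length \<beta> < k" "x \<in> \<Omega>"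
  shows "((\<lambda>t. pdiffs \<beta> (f \<iota>) (x + t *\<^sub>R axis i 1)) has_vector_derivative pdiffs (i#\<beta>) (f \<iota>) x) (at 0)"
proof -
  have eq: "k - length \<beta> = Suc (k - length \<beta> - 1)" using assms(2) by simp
  have "Ck_on (Suc (k - length \<beta> - 1)) \<Omega> (pdiffs \<beta> (f \<iota>))"
    using hCk[OF assms(1), of \<beta>] assms(2) eq by simp
  then have "(\<lambda>t. pdiffs \<beta> (f \<iota>) (x + t *\<^sub>R axis i 1)) differentiable (at 0)"
    using assms(3) by simp
  then show ?thesis unfolding vector_derivative_works by (simp add: pdiff_def)
qed

lemma EQ:
  assumes "compact K" "K \<subseteq> \<Omega>"
  obtains \<delta> M where "0 < \<delta>" "\<delta> \<le> 1" "0 \<le> M" "\<And>x. x \<in> K \<Longrightarrow> cball x \<delta> \<subseteq> \<Omega>"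
    "\<And>\<iota> \<beta> x y. \<iota> \<in> I \<Longrightarrow> length \<beta> \<le> k \<Longrightarrow> x \<in> K \<Longrightarrow> dist x y \<le> \<delta> \<Longrightarrow>
        norm (pdiffs \<beta> (f \<iota>) y - pdiffs \<beta> (f \<iota>) x) \<le> M * dist x y powr \<gamma>"
proof -
  obtain \<delta> K2 where d: "0 < \<delta>" "\<delta> \<le> 1" "compact K2" "K2 \<subseteq> \<Omega>" "\<And>x. x \<in> K \<Longrightarrow> cball x \<delta> \<subseteq> K2"
    using cball_thicken[OF assms opn] by blast
  obtain C where C: "\<forall>\<iota>\<in>I. holder_bound k \<gamma> K2 (f \<iota>) C" using bnd d(3,4) by blast
  define M where "M = max C 0 * (1 + real CARD('n))"
  have n0: "0 \<le> real CARD('n)" by (rule of_nat_0_le_iff)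
  have c0: "0 \<le> max C 0" by (rule max.cobounded2)
  have cc: "C \<le> max C 0" by (rule max.cobounded1)
  have p0: "0 \<le> max C 0 * real CARD('n)" using c0 n0 by (rule mult_nonneg_nonneg)
  have Meq: "M = max C 0 + max C 0 * real CARD('n)" unfolding M_def by (simp add: distrib_left)
  have M0: "0 \<le> M" using Meq c0 p0 by linarith
  have CM: "C \<le> M" using Meq cc p0 by linarith
  have "C * real CARD('n) \<le> max C 0 * real CARD('n)" using cc n0 by (rule mult_right_mono)
  then have CM2: "C * real CARD('n) \<le> M" using Meq c0 by linarith
  have main: "norm (pdiffs \<beta> (f \<iota>) y - pdiffs \<beta> (f \<iota>) x) \<le> M * dist x y powr \<gamma>"
    if \<iota>: "\<iota> \<in> I" and \<beta>: "length \<beta> \<le> k" and x: "x \<in> K" and xy: "dist x y \<le> \<delta>" for \<iota> \<beta> x y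
  proof (cases "x = y")
    case True then show ?thesis using M0 by simp
  next
    case False
    have xK2: "x \<in> K2" using d(5)[OF x] d(1) by auto
    have yK2: "y \<in> K2" using d(5)[OF x] xy by auto
    have hb: "holder_bound k \<gamma> K2 (f \<iota>) C" using C \<iota> by blast
    show ?thesis
    proof (cases "length \<beta> = k")
      case True
      then have "norm (pdiffs \<beta> (f \<iota>) y - pdiffs \<beta> (f \<iota>) x) \<le> C * dist y x powr \<gamma>"
        using hb yK2 xK2 False unfolding holder_bound_def by auto
      also have "\<dots> \<le> M * dist x y powr \<gamma>"
        using CM by (simp add: dist_commute mult_right_mono)
      finally show ?thesis .
    next
      case False
      then have lt: "length \<beta> < k" using \<beta> by simp
      have C0: "\<And>i z. z \<in> K2 \<Longrightarrow> norm (pdiffs (i#\<beta>) (f \<iota>) z) \<le> C"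
        using hb lt unfolding holder_bound_def by (metis Suc_leI length_Cons)
      have "norm (pdiffs \<beta> (f \<iota>) y - pdiffs \<beta> (f \<iota>) x) \<le> C * (\<Sum>i\<in>UNIV. \<bar>y$i - x$i\<bar>)"
      proof (rule staircase[where S = K2 and D = "\<lambda>i z. pdiffs (i#\<beta>) (f \<iota>) z"])
        fix i z assume "z \<in> K2"
        then show "((\<lambda>t. pdiffs \<beta> (f \<iota>) (z + t *\<^sub>R axis i 1)) has_vector_derivative pdiffs (i#\<beta>) (f \<iota>) z) (at 0)"
          using hder[OF \<iota> lt] d(4) by blast
        show "norm (pdiffs (i#\<beta>) (f \<iota>) z) \<le> C" using C0 \<open>z \<in> K2\<close> .
      next
        fix z :: "real^'n" assume "norm (z - x) \<le> norm (y - x)"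
        then have "z \<in> cball x \<delta>" using xy by (simp add: dist_norm norm_minus_commute)
        then show "z \<in> K2" using d(5)[OF x] by blast
      qed
      also have "\<dots> \<le> C * (real CARD('n) * dist x y)"
      proof -
        have "0 \<le> C" using C0[OF xK2] norm_ge_zero order_trans by blast
        then show ?thesis using sum_abs_le_card_norm[of y x] mult_left_mono by blast
      qed
      also have "\<dots> \<le> M * dist x y"
        using CM2 by (simp add: mult.assoc[symmetric] mult_right_mono)
      also have "\<dots> \<le> M * dist x y powr \<gamma>"
        using le_powr_small[of "dist x y" \<gamma>] xy d(2) gpos gle M0 by (simp add: mult_left_mono)
      finally show ?thesis .
    qed
  qed
  show ?thesis
    using that[OF d(1,2) M0 _ main] d(4,5) by blast
qed



lemma line_est:
  assumes Mb: "\<And>\<iota> \<beta> x y. \<iota> \<in> I \<Longrightarrow> length \<beta> \<le> k \<Longrightarrow> x \<in> K \<Longrightarrow> dist x y \<le> \<delta> \<Longrightarrow>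
        norm (pdiffs \<beta> (f \<iota>) y - pdiffs \<beta> (f \<iota>) x) \<le> M * dist x y powr \<gamma>"
    and cb: "\<And>x. x \<in> K \<Longrightarrow> cball x \<delta> \<subseteq> \<Omega>" and M0: "0 \<le> M"
    and \<iota>: "\<iota> \<in> I" and lt: "length \<beta> < k" and x: "x \<in> K" and t: "\<bar>t\<bar> \<le> \<delta>"
  shows "norm (pdiffs \<beta> (f \<iota>) (x + t *\<^sub>R axis i 1) - pdiffs \<beta> (f \<iota>) x - t *\<^sub>R pdiffs (i#\<beta>) (f \<iota>) x)
           \<le> \<bar>t\<bar> * (M * \<bar>t\<bar> powr \<gamma>)"
proof -
  have "norm (pdiffs \<beta> (f \<iota>) (x + t *\<^sub>R axis i 1) - pdiffs \<beta> (f \<iota>) (x + 0 *\<^sub>R axis i 1) - t *\<^sub>R pdiffs (i#\<beta>) (f \<iota>) x)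
           \<le> \<bar>t\<bar> * (M * \<bar>t\<bar> powr \<gamma>)"
  proof (rule mvt0[where \<phi>' = "\<lambda>s. pdiffs (i#\<beta>) (f \<iota>) (x + s *\<^sub>R axis i 1)"])
    fix s assume s: "s \<in> closed_segment 0 t"
    have st: "\<bar>s\<bar> \<le> \<bar>t\<bar>" using s by (auto simp: closed_segment_eq_real_ivl split: if_splits)
    have dxs: "dist x (x + s *\<^sub>R axis i 1) = \<bar>s\<bar>" by (simp add: dist_norm)
    have mem: "x + s *\<^sub>R axis i 1 \<in> \<Omega>" using cb[OF x] st t dxs by auto
    show "((\<lambda>s. pdiffs \<beta> (f \<iota>) (x + s *\<^sub>R axis i 1)) has_vector_derivative pdiffs (i#\<beta>) (f \<iota>) (x + s *\<^sub>R axis i 1)) (at s)"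
      by (rule line_shift) (rule hder[OF \<iota> lt mem])
    have "norm (pdiffs (i#\<beta>) (f \<iota>) (x + s *\<^sub>R axis i 1) - pdiffs (i#\<beta>) (f \<iota>) x) \<le> M * dist x (x + s *\<^sub>R axis i 1) powr \<gamma>"
      using Mb[OF \<iota> _ x, of "i#\<beta>" "x + s *\<^sub>R axis i 1"] lt dxs st t by simp
    also have "\<dots> \<le> M * \<bar>t\<bar> powr \<gamma>" unfolding dxs using st gpos M0 by (intro mult_left_mono powr_mono2) auto
    finally show "norm (pdiffs (i#\<beta>) (f \<iota>) (x + s *\<^sub>R axis i 1) - pdiffs (i#\<beta>) (f \<iota>) x) \<le> M * \<bar>t\<bar> powr \<gamma>" .
  qed
  then show ?thesis by simp
qed

definition ucauchy :: "(real^'n) set \<Rightarrow> 'n list \<Rightarrow> bool" where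
  "ucauchy K \<beta> \<longleftrightarrow> (\<forall>\<epsilon>>0. \<exists>a\<in>I. \<forall>b\<in>I. \<forall>c\<in>I. R a b \<longrightarrow> R a c \<longrightarrow>
      (\<forall>x\<in>K. dist (pdiffs \<beta> (f b) x) (pdiffs \<beta> (f c) x) \<le> \<epsilon>))"

lemma uc_deriv:
  assumes len: "length (i#\<beta>) \<le> k" and all: "\<And>K. compact K \<Longrightarrow> K \<subseteq> \<Omega> \<Longrightarrow> ucauchy K \<beta>"
    and K: "compact K" "K \<subseteq> \<Omega>"
  shows "ucauchy K (i#\<beta>)"
proof -
  obtain \<delta> M where d: "0 < \<delta>" "\<delta> \<le> 1" "0 \<le> M" "\<And>x. x \<in> K \<Longrightarrow> cball x \<delta> \<subseteq> \<Omega>"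
    and Mb: "\<And>\<iota> \<beta> x y. \<iota> \<in> I \<Longrightarrow> length \<beta> \<le> k \<Longrightarrow> x \<in> K \<Longrightarrow> dist x y \<le> \<delta> \<Longrightarrow>
        norm (pdiffs \<beta> (f \<iota>) y - pdiffs \<beta> (f \<iota>) x) \<le> M * dist x y powr \<gamma>"
  proof -
    show thesis by (rule EQ[OF K]) (rule that)
  qed
  obtain \<delta>2 K2 where d2: "0 < \<delta>2" "compact K2" "K2 \<subseteq> \<Omega>" "\<And>x. x \<in> K \<Longrightarrow> cball x \<delta>2 \<subseteq> K2"
  proof -
    show thesis by (rule cball_thicken[OF K opn]) (rule that)
  qed
  have lt: "length \<beta> < k" using len by simp
  show ?thesis unfolding ucauchy_def
  proof (intro allI impI)
    fix e :: real assume e: "e > 0"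
    define t where "t = min (min \<delta> \<delta>2) ((e / 4 / (M + 1)) powr (1/\<gamma>))"
    have tpos: "0 < t" unfolding t_def using d(1) d2(1) e d(3) by simp
    have td: "t \<le> \<delta>" "t \<le> \<delta>2" unfolding t_def by auto
    have Mt: "M * t powr \<gamma> \<le> e/4"
      by (rule small_powr) (use d(3) e gpos tpos in \<open>auto simp: t_def\<close>)
    have "e * t / 4 > 0" using e tpos by simp
    then obtain a where a: "a \<in> I" and ab: "\<forall>b\<in>I. \<forall>c\<in>I. R a b \<longrightarrow> R a c \<longrightarrow>
      (\<forall>x\<in>K2. dist (pdiffs \<beta> (f b) x) (pdiffs \<beta> (f c) x) \<le> e * t / 4)"
      using all[OF d2(2,3)] unfolding ucauchy_def by blast
    have "\<forall>b\<in>I. \<forall>c\<in>I. R a b \<longrightarrow> R a c \<longrightarrow>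
      (\<forall>x\<in>K. dist (pdiffs (i#\<beta>) (f b) x) (pdiffs (i#\<beta>) (f c) x) \<le> e)"
    proof (intro ballI impI)
      fix b c x assume b: "b \<in> I" and c: "c \<in> I" and rb: "R a b" and rc: "R a c" and x: "x \<in> K"
      define xt where "xt = x + t *\<^sub>R axis i 1"
      have "dist x xt = t" unfolding xt_def using tpos by (simp add: dist_norm)
      then have xt: "xt \<in> K2" using d2(4)[OF x] td by auto
      have xK2: "x \<in> K2" using d2(4)[OF x] d2(1) by auto
      have tabs: "\<bar>t\<bar> \<le> \<delta>" using tpos td by simp
      have Eb: "norm (pdiffs \<beta> (f b) xt - pdiffs \<beta> (f b) x - t *\<^sub>R pdiffs (i#\<beta>) (f b) x) \<le> t * (e/4)"
      proof -
        have "norm (pdiffs \<beta> (f b) xt - pdiffs \<beta> (f b) x - t *\<^sub>R pdiffs (i#\<beta>) (f b) x) \<le> \<bar>t\<bar> * (M * \<bar>t\<bar> powr \<gamma>)"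
          unfolding xt_def by (rule line_est[OF Mb d(4) d(3) b lt x tabs])
        also have "\<dots> \<le> t * (e/4)" using Mt tpos by (simp add: mult_left_mono)
        finally show ?thesis .
      qed
      have Ec: "norm (pdiffs \<beta> (f c) xt - pdiffs \<beta> (f c) x - t *\<^sub>R pdiffs (i#\<beta>) (f c) x) \<le> t * (e/4)"
      proof -
        have "norm (pdiffs \<beta> (f c) xt - pdiffs \<beta> (f c) x - t *\<^sub>R pdiffs (i#\<beta>) (f c) x) \<le> \<bar>t\<bar> * (M * \<bar>t\<bar> powr \<gamma>)"
          unfolding xt_def by (rule line_est[OF Mb d(4) d(3) c lt x tabs])
        also have "\<dots> \<le> t * (e/4)" using Mt tpos by (simp add: mult_left_mono)
        finally show ?thesis .
      qed
      have P1: "norm (pdiffs \<beta> (f b) xt - pdiffs \<beta> (f c) xt) \<le> e * t / 4"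
        using ab b c rb rc xt by (simp add: dist_norm)
      have P2: "norm (pdiffs \<beta> (f b) x - pdiffs \<beta> (f c) x) \<le> e * t / 4"
        using ab b c rb rc xK2 by (simp add: dist_norm)
      have eq1: "e * t / 4 = t * (e/4)" and eq2: "t * e = 4 * (t * (e/4))" by simp_all
      have "t * norm (pdiffs (i#\<beta>) (f b) x - pdiffs (i#\<beta>) (f c) x)
          = norm (t *\<^sub>R (pdiffs (i#\<beta>) (f b) x - pdiffs (i#\<beta>) (f c) x))" using tpos by simp
      also have "\<dots> \<le> t * e"
        using tri4[of t "pdiffs (i#\<beta>) (f b) x" "pdiffs (i#\<beta>) (f c) x" "pdiffs \<beta> (f b) xt" "pdiffs \<beta> (f c) xt"
            "pdiffs \<beta> (f b) x" "pdiffs \<beta> (f c) x"] Eb Ec P1 P2 eq1 eq2 by linarith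
      finally have "t * norm (pdiffs (i#\<beta>) (f b) x - pdiffs (i#\<beta>) (f c) x) \<le> t * e" .
      then show "dist (pdiffs (i#\<beta>) (f b) x) (pdiffs (i#\<beta>) (f c) x) \<le> e"
        using tpos by (simp add: dist_norm)
    qed
    then show "\<exists>a\<in>I. \<forall>b\<in>I. \<forall>c\<in>I. R a b \<longrightarrow> R a c \<longrightarrow>
      (\<forall>x\<in>K. dist (pdiffs (i#\<beta>) (f b) x) (pdiffs (i#\<beta>) (f c) x) \<le> e)" using a by blast
  qed
qed


lemma uc_dense:
  assumes len: "length \<beta> \<le> k" and U: "U \<subseteq> \<Omega>" "\<Omega> \<subseteq> closure U"
    and pc: "\<And>x. x \<in> U \<Longrightarrow> ucauchy {x} \<beta>" and K: "compact K" "K \<subseteq> \<Omega>"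
  shows "ucauchy K \<beta>"
proof -
  obtain \<delta> M where d: "0 < \<delta>" "\<delta> \<le> 1" "0 \<le> M" "\<And>x. x \<in> K \<Longrightarrow> cball x \<delta> \<subseteq> \<Omega>"
    and Mb: "\<And>\<iota> \<beta> x y. \<iota> \<in> I \<Longrightarrow> length \<beta> \<le> k \<Longrightarrow> x \<in> K \<Longrightarrow> dist x y \<le> \<delta> \<Longrightarrow>
        norm (pdiffs \<beta> (f \<iota>) y - pdiffs \<beta> (f \<iota>) x) \<le> M * dist x y powr \<gamma>"
  proof -
    show thesis by (rule EQ[OF K]) (rule that)
  qed
  show ?thesis unfolding ucauchy_def
  proof (intro allI impI)
    fix e :: real assume e: "e > 0"
    define \<rho> where "\<rho> = min \<delta> ((e / 3 / (M + 1)) powr (1/\<gamma>))"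
    have rpos: "0 < \<rho>" unfolding \<rho>_def using d(1) e d(3) by simp
    have rd: "\<rho> \<le> \<delta>" unfolding \<rho>_def by auto
    have Mr: "M * \<rho> powr \<gamma> \<le> e/3"
      by (rule small_powr) (use d(3) e gpos rpos in \<open>auto simp: \<rho>_def\<close>)
    have "\<forall>\<epsilon>>0. \<exists>T. finite T \<and> T \<subseteq> K \<and> K \<subseteq> (\<Union>x\<in>T. ball x \<epsilon>)"
      by (rule seq_compact_imp_totally_bounded[OF compact_imp_seq_compact[OF K(1)]])
    then obtain T where T: "finite T" "T \<subseteq> K" "K \<subseteq> (\<Union>x\<in>T. ball x (\<rho>/2))"
      using rpos by (meson half_gt_zero)
    have "\<forall>c\<in>T. \<exists>u. u \<in> U \<and> dist u c < \<rho>/2"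
    proof
      fix c assume "c \<in> T"
      then have "c \<in> closure U" using T(2) K(2) U(2) by blast
      moreover have "\<rho>/2 > 0" using rpos by simp
      ultimately obtain y where "y \<in> U" "dist y c < \<rho>/2" unfolding closure_approachable by blast
      then show "\<exists>u. u \<in> U \<and> dist u c < \<rho>/2" by blast
    qed
    then obtain u where u: "\<forall>c\<in>T. u c \<in> U \<and> dist (u c) c < \<rho>/2" by metis
    have "\<forall>c\<in>T. \<exists>a\<in>I. \<forall>b\<in>I. \<forall>b'\<in>I. R a b \<longrightarrow> R a b' \<longrightarrow>
            dist (pdiffs \<beta> (f b) (u c)) (pdiffs \<beta> (f b') (u c)) \<le> e/3"
    proof
      fix c assume "c \<in> T"
      then have "ucauchy {u c} \<beta>" using pc u by blast
      moreover have "e/3 > 0" using e by simp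
      ultimately show "\<exists>a\<in>I. \<forall>b\<in>I. \<forall>b'\<in>I. R a b \<longrightarrow> R a b' \<longrightarrow>
            dist (pdiffs \<beta> (f b) (u c)) (pdiffs \<beta> (f b') (u c)) \<le> e/3"
        unfolding ucauchy_def by blast
    qed
    from cauchy_combine[OF dir T(1) this] obtain a where a: "a \<in> I"
      and ab: "\<forall>b\<in>I. \<forall>b'\<in>I. R a b \<longrightarrow> R a b' \<longrightarrow> (\<forall>c\<in>T. dist (pdiffs \<beta> (f b) (u c)) (pdiffs \<beta> (f b') (u c)) \<le> e/3)"
      by blast
    have "\<forall>b\<in>I. \<forall>b'\<in>I. R a b \<longrightarrow> R a b' \<longrightarrow> (\<forall>x\<in>K. dist (pdiffs \<beta> (f b) x) (pdiffs \<beta> (f b') x) \<le> e)"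
    proof (intro ballI impI)
      fix b b' x assume b: "b \<in> I" and b': "b' \<in> I" and rb: "R a b" and rb': "R a b'" and x: "x \<in> K"
      obtain c where c: "c \<in> T" "x \<in> ball c (\<rho>/2)" using T(3) x by blast
      define v where "v = u c"
      have "dist x v \<le> dist x c + dist c v" by (rule dist_triangle)
      also have "\<dots> < \<rho>"
      proof -
        have "dist x c < \<rho>/2" using c(2) by (simp add: dist_commute)
        moreover have "dist c v < \<rho>/2" using c(1) u unfolding v_def by (simp add: dist_commute)
        ultimately show ?thesis by linarith
      qed
      finally have xv: "dist x v < \<rho>" .
      have xvd: "dist x v \<le> \<delta>" using xv rd by simp
      have pw: "M * dist x v powr \<gamma> \<le> e/3"
      proof -
        have "M * dist x v powr \<gamma> \<le> M * \<rho> powr \<gamma>"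
          using xv gpos d(3) by (intro mult_left_mono powr_mono2) auto
        then show ?thesis using Mr by simp
      qed
      have n1: "norm (pdiffs \<beta> (f b) v - pdiffs \<beta> (f b) x) \<le> e/3"
        using Mb[OF b len x xvd] pw by simp
      have n2: "norm (pdiffs \<beta> (f b') v - pdiffs \<beta> (f b') x) \<le> e/3"
        using Mb[OF b' len x xvd] pw by simp
      have n3: "dist (pdiffs \<beta> (f b) v) (pdiffs \<beta> (f b') v) \<le> e/3"
        using ab b b' rb rb' c(1) unfolding v_def by blast
      have "dist (pdiffs \<beta> (f b) x) (pdiffs \<beta> (f b') x)
          \<le> dist (pdiffs \<beta> (f b) x) (pdiffs \<beta> (f b) v) + dist (pdiffs \<beta> (f b) v) (pdiffs \<beta> (f b') v)
             + dist (pdiffs \<beta> (f b') v) (pdiffs \<beta> (f b') x)"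
        using dist_triangle[of "pdiffs \<beta> (f b) x" "pdiffs \<beta> (f b') x" "pdiffs \<beta> (f b) v"]
          dist_triangle[of "pdiffs \<beta> (f b) v" "pdiffs \<beta> (f b') x" "pdiffs \<beta> (f b') v"] by linarith
      also have "\<dots> \<le> e/3 + e/3 + e/3"
        using n1 n2 n3 by (simp add: dist_norm norm_minus_commute)
      finally show "dist (pdiffs \<beta> (f b) x) (pdiffs \<beta> (f b') x) \<le> e" by simp
    qed
    then show "\<exists>a\<in>I. \<forall>b\<in>I. \<forall>c\<in>I. R a b \<longrightarrow> R a c \<longrightarrow>
      (\<forall>x\<in>K. dist (pdiffs \<beta> (f b) x) (pdiffs \<beta> (f c) x) \<le> e)" using a by blast
  qed
qed


lemma diff_est:
  assumes k1: "1 \<le> k" and der: "\<And>n K. compact K \<Longrightarrow> K \<subseteq> \<Omega> \<Longrightarrow> ucauchy K [n]"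
    and x: "cball x r \<subseteq> \<Omega>" and y: "y \<in> cball x r" and \<eta>: "\<eta> > 0"
  shows "\<exists>a\<in>I. \<forall>b\<in>I. \<forall>c\<in>I. R a b \<longrightarrow> R a c \<longrightarrow> norm ((f b y - f c y) - (f b x - f c x)) \<le> \<eta>"
proof -
  have "dist x y \<le> r" using y by simp
  then have r0: "0 \<le> r" using zero_le_dist[of x y] by linarith
  define \<epsilon> where "\<epsilon> = \<eta> / (real CARD('n) * r + 1)"
  have den: "0 < real CARD('n) * r + 1" using r0 by (simp add: add_nonneg_pos)
  have \<epsilon>0: "\<epsilon> > 0" unfolding \<epsilon>_def using \<eta> den by simp
  have "\<forall>n\<in>(UNIV::'n set). \<exists>a\<in>I. \<forall>b\<in>I. \<forall>c\<in>I. R a b \<longrightarrow> R a c \<longrightarrow>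
      (\<forall>z\<in>cball x r. dist (pdiffs [n] (f b) z) (pdiffs [n] (f c) z) \<le> \<epsilon>)"
  proof
    fix n :: 'n
    have "ucauchy (cball x r) [n]" using der[OF compact_cball x] .
    then show "\<exists>a\<in>I. \<forall>b\<in>I. \<forall>c\<in>I. R a b \<longrightarrow> R a c \<longrightarrow>
      (\<forall>z\<in>cball x r. dist (pdiffs [n] (f b) z) (pdiffs [n] (f c) z) \<le> \<epsilon>)"
      unfolding ucauchy_def using \<epsilon>0 by blast
  qed
  from cauchy_combine[OF dir finite[of "UNIV::'n set"] this] obtain a where a: "a \<in> I"
    and ab: "\<forall>b\<in>I. \<forall>c\<in>I. R a b \<longrightarrow> R a c \<longrightarrow>
      (\<forall>n\<in>UNIV. \<forall>z\<in>cball x r. dist (pdiffs [n] (f b) z) (pdiffs [n] (f c) z) \<le> \<epsilon>)"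
    by blast
  have "\<forall>b\<in>I. \<forall>c\<in>I. R a b \<longrightarrow> R a c \<longrightarrow> norm ((f b y - f c y) - (f b x - f c x)) \<le> \<eta>"
  proof (intro ballI impI)
    fix b c assume b: "b \<in> I" and c: "c \<in> I" and rb: "R a b" and rc: "R a c"
    have lt: "length ([] :: 'n list) < k" using k1 by simp
    have "norm ((\<lambda>z. f b z - f c z) y - (\<lambda>z. f b z - f c z) x) \<le> \<epsilon> * (\<Sum>i\<in>UNIV. \<bar>y$i - x$i\<bar>)"
    proof (rule staircase[where S = "cball x r" and D = "\<lambda>n z. pdiffs [n] (f b) z - pdiffs [n] (f c) z"])
      fix n z assume z: "z \<in> cball x r"
      then have zO: "z \<in> \<Omega>" using x by blast
      show "((\<lambda>t. (\<lambda>z. f b z - f c z) (z + t *\<^sub>R axis n 1)) has_vector_derivative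
              pdiffs [n] (f b) z - pdiffs [n] (f c) z) (at 0)"
        using has_vector_derivative_diff[OF hder[OF b lt zO, of n] hder[OF c lt zO, of n]] by simp
      show "norm (pdiffs [n] (f b) z - pdiffs [n] (f c) z) \<le> \<epsilon>"
        using ab b c rb rc z by (simp add: dist_norm)
    next
      fix z :: "real^'n" assume "norm (z - x) \<le> norm (y - x)"
      then show "z \<in> cball x r" using y by (simp add: dist_norm norm_minus_commute)
    qed
    also have "\<dots> \<le> \<epsilon> * (real CARD('n) * dist x y)"
      using sum_abs_le_card_norm[of y x] \<epsilon>0 by (intro mult_left_mono) auto
    also have "\<dots> \<le> \<epsilon> * (real CARD('n) * r + 1)"
    proof -
      have "real CARD('n) * dist x y \<le> real CARD('n) * r" using y by (intro mult_left_mono) auto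
      then have "real CARD('n) * dist x y \<le> real CARD('n) * r + 1" by linarith
      then show ?thesis using \<epsilon>0 by (intro mult_left_mono) auto
    qed
    also have "\<dots> = \<eta>" unfolding \<epsilon>_def using den by simp
    finally show "norm ((f b y - f c y) - (f b x - f c x)) \<le> \<eta>" by simp
  qed
  then show ?thesis using a by blast
qed

lemma transfer_pt:
  assumes est: "\<forall>\<eta>>0. \<exists>a\<in>I. \<forall>b\<in>I. \<forall>c\<in>I. R a b \<longrightarrow> R a c \<longrightarrow> norm ((f b u - f c u) - (f b v - f c v)) \<le> \<eta>"
    and v: "ucauchy {v} []"
  shows "ucauchy {u} []"
  unfolding ucauchy_def
proof (intro allI impI)
  fix e :: real assume e: "e > 0"
  then have e2: "e/2 > 0" by simp
  have P: "\<exists>a\<in>I. \<forall>b\<in>I. \<forall>c\<in>I. R a b \<longrightarrow> R a c \<longrightarrow> norm ((f b u - f c u) - (f b v - f c v)) \<le> e/2"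
    using est e2 by blast
  have Q: "\<exists>a\<in>I. \<forall>b\<in>I. \<forall>c\<in>I. R a b \<longrightarrow> R a c \<longrightarrow> dist (f b v) (f c v) \<le> e/2"
  proof -
    have "\<forall>\<epsilon>>0. \<exists>a\<in>I. \<forall>b\<in>I. \<forall>c\<in>I. R a b \<longrightarrow> R a c \<longrightarrow> dist (f b v) (f c v) \<le> \<epsilon>"
      using v unfolding ucauchy_def by simp
    then show ?thesis using e2 by blast
  qed
  obtain a where a: "a \<in> I" and ab: "\<forall>b\<in>I. \<forall>c\<in>I. R a b \<longrightarrow> R a c \<longrightarrow>
      norm ((f b u - f c u) - (f b v - f c v)) \<le> e/2 \<and> dist (f b v) (f c v) \<le> e/2"
    using cauchy_two[OF dir P Q] by blast
  have "\<forall>b\<in>I. \<forall>c\<in>I. R a b \<longrightarrow> R a c \<longrightarrow> (\<forall>x\<in>{u}. dist (pdiffs [] (f b) x) (pdiffs [] (f c) x) \<le> e)"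
  proof (intro ballI impI)
    fix b c x assume b: "b \<in> I" and c: "c \<in> I" and rb: "R a b" and rc: "R a c" and x: "x \<in> {u}"
    have h: "norm ((f b u - f c u) - (f b v - f c v)) \<le> e/2" "norm (f b v - f c v) \<le> e/2"
      using ab b c rb rc by (auto simp: dist_norm)
    have "norm (f b u - f c u) \<le> norm ((f b u - f c u) - (f b v - f c v)) + norm (f b v - f c v)"
      using norm_triangle_ineq[of "(f b u - f c u) - (f b v - f c v)" "f b v - f c v"] by simp
    then show "dist (pdiffs [] (f b) x) (pdiffs [] (f c) x) \<le> e" using h x by (simp add: dist_norm)
  qed
  then show "\<exists>a\<in>I. \<forall>b\<in>I. \<forall>c\<in>I. R a b \<longrightarrow> R a c \<longrightarrow> (\<forall>x\<in>{u}. dist (pdiffs [] (f b) x) (pdiffs [] (f c) x) \<le> e)"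
    using a by blast
qed

lemma loc_equiv:
  assumes k1: "1 \<le> k" and der: "\<And>n K. compact K \<Longrightarrow> K \<subseteq> \<Omega> \<Longrightarrow> ucauchy K [n]" and x: "x \<in> \<Omega>"
  shows "\<exists>r>0. ball x r \<subseteq> \<Omega> \<and> (\<forall>y\<in>ball x r. ucauchy {y} [] \<longleftrightarrow> ucauchy {x} [])"
proof -
  obtain r where r: "r > 0" "cball x r \<subseteq> \<Omega>" using opn x open_contains_cball by blast
  have "ucauchy {y} [] \<longleftrightarrow> ucauchy {x} []" if y: "y \<in> ball x r" for y
  proof
    have yc: "y \<in> cball x r" using y by simp
    have est: "\<forall>\<eta>>0. \<exists>a\<in>I. \<forall>b\<in>I. \<forall>c\<in>I. R a b \<longrightarrow> R a c \<longrightarrow> norm ((f b y - f c y) - (f b x - f c x)) \<le> \<eta>"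
      using diff_est[OF k1 der r(2) yc] by blast
    have est': "\<forall>\<eta>>0. \<exists>a\<in>I. \<forall>b\<in>I. \<forall>c\<in>I. R a b \<longrightarrow> R a c \<longrightarrow> norm ((f b x - f c x) - (f b y - f c y)) \<le> \<eta>"
      using est by (simp add: norm_minus_commute)
    show "ucauchy {x} []" if "ucauchy {y} []" using transfer_pt[OF est' that] .
    show "ucauchy {y} []" if "ucauchy {x} []" using transfer_pt[OF est that] .
  qed
  moreover have "ball x r \<subseteq> \<Omega>" using r(2) ball_subset_cball by blast
  ultimately show ?thesis using r(1) by blast
qed

lemma uc_conn:
  assumes k1: "1 \<le> k" and conn: "connected \<Omega>" and der: "\<And>n K. compact K \<Longrightarrow> K \<subseteq> \<Omega> \<Longrightarrow> ucauchy K [n]"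
    and x0: "x0 \<in> \<Omega>" "ucauchy {x0} []" and x: "x \<in> \<Omega>"
  shows "ucauchy {x} []"
proof -
  define S where "S = {x\<in>\<Omega>. ucauchy {x} []}"
  define T where "T = {x\<in>\<Omega>. \<not> ucauchy {x} []}"
  have "open S" unfolding open_contains_ball
  proof
    fix z assume "z \<in> S"
    then have z: "z \<in> \<Omega>" "ucauchy {z} []" unfolding S_def by auto
    obtain r where r: "r > 0" "ball z r \<subseteq> \<Omega>" "\<forall>y\<in>ball z r. ucauchy {y} [] \<longleftrightarrow> ucauchy {z} []"
      using loc_equiv[OF k1 der z(1)] by blast
    have "ball z r \<subseteq> S" unfolding S_def using r z(2) by blast
    then show "\<exists>e>0. ball z e \<subseteq> S" using r(1) by blast
  qed
  moreover have "open T" unfolding open_contains_ball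
  proof
    fix z assume "z \<in> T"
    then have z: "z \<in> \<Omega>" "\<not> ucauchy {z} []" unfolding T_def by auto
    obtain r where r: "r > 0" "ball z r \<subseteq> \<Omega>" "\<forall>y\<in>ball z r. ucauchy {y} [] \<longleftrightarrow> ucauchy {z} []"
      using loc_equiv[OF k1 der z(1)] by blast
    have "ball z r \<subseteq> T" unfolding T_def using r z(2) by blast
    then show "\<exists>e>0. ball z e \<subseteq> T" using r(1) by blast
  qed
  moreover have "S \<inter> T \<inter> \<Omega> = {}" unfolding S_def T_def by blast
  moreover have "\<Omega> \<subseteq> S \<union> T" unfolding S_def T_def by blast
  ultimately have "S \<inter> \<Omega> = {} \<or> T \<inter> \<Omega> = {}" using connectedD[OF conn] by blast
  moreover have "x0 \<in> S \<inter> \<Omega>" unfolding S_def using x0 by blast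
  ultimately have "T \<inter> \<Omega> = {}" by blast
  then show ?thesis using x unfolding T_def by blast
qed


lemma pt_uc:
  assumes "((\<lambda>\<iota>. pdiffs \<beta> (f \<iota>) x) \<longlongrightarrow> l) (net_filter I R)"
  shows "ucauchy {x} \<beta>"
  using conv_cauchy[OF dir assms] unfolding ucauchy_def by simp

lemma uc_all:
  assumes base: "\<And>K. compact K \<Longrightarrow> K \<subseteq> \<Omega> \<Longrightarrow> ucauchy K []"
  shows "length \<beta> \<le> k \<Longrightarrow> compact K \<Longrightarrow> K \<subseteq> \<Omega> \<Longrightarrow> ucauchy K \<beta>"
proof (induction \<beta> arbitrary: K)
  case Nil
  then show ?case using base by blast
next
  case (Cons i \<beta>)
  have "\<And>K. compact K \<Longrightarrow> K \<subseteq> \<Omega> \<Longrightarrow> ucauchy K \<beta>" using Cons.IH Cons.prems(1) by simp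
  then show ?case using uc_deriv[OF Cons.prems(1) _ Cons.prems(2,3)] by blast
qed

end

locale hfull = hsetup \<Omega> f I R k \<gamma>
  for \<Omega> :: "(real^'n::finite) set" and f :: "'i \<Rightarrow> real^'n \<Rightarrow> 'e::banach"
    and I :: "'i set" and R :: "'i \<Rightarrow> 'i \<Rightarrow> bool" and k :: nat and \<gamma> :: real +
  assumes ucall: "\<And>\<beta> K. length \<beta> \<le> k \<Longrightarrow> compact K \<Longrightarrow> K \<subseteq> \<Omega> \<Longrightarrow> ucauchy K \<beta>"
begin

definition G :: "'n list \<Rightarrow> real^'n \<Rightarrow> 'e" where
  "G \<beta> x = Lim (net_filter I R) (\<lambda>\<iota>. pdiffs \<beta> (f \<iota>) x)"

lemma G_lim:
  assumes "length \<beta> \<le> k" "x \<in> \<Omega>"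
  shows "((\<lambda>\<iota>. pdiffs \<beta> (f \<iota>) x) \<longlongrightarrow> G \<beta> x) (net_filter I R)"
proof -
  have uc: "ucauchy {x} \<beta>" using ucall[OF assms(1)] assms(2) by simp
  have "\<forall>\<epsilon>>0. \<exists>a\<in>I. \<forall>b\<in>I. \<forall>c\<in>I. R a b \<longrightarrow> R a c \<longrightarrow> dist (pdiffs \<beta> (f b) x) (pdiffs \<beta> (f c) x) \<le> \<epsilon>"
    using uc unfolding ucauchy_def by simp
  then have "\<exists>l. ((\<lambda>\<iota>. pdiffs \<beta> (f \<iota>) x) \<longlongrightarrow> l) (net_filter I R)"
    by (rule net_cauchy_conv[OF dir])
  then obtain l where l: "((\<lambda>\<iota>. pdiffs \<beta> (f \<iota>) x) \<longlongrightarrow> l) (net_filter I R)" by blast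
  have "G \<beta> x = l" unfolding G_def using net_ne[OF dir] l by (intro tendsto_Lim) auto
  then show ?thesis using l by simp
qed

lemma G_unif:
  assumes len: "length \<beta> \<le> k" and K: "compact K" "K \<subseteq> \<Omega>"
  shows "uniform_limit K (\<lambda>\<iota>. pdiffs \<beta> (f \<iota>)) (G \<beta>) (net_filter I R)"
  unfolding uniform_limit_iff
proof (intro allI impI)
  fix e :: real assume e: "e > 0"
  then have e2: "e/2 > 0" by simp
  obtain a where a: "a \<in> I" and ab: "\<forall>b\<in>I. \<forall>c\<in>I. R a b \<longrightarrow> R a c \<longrightarrow>
      (\<forall>x\<in>K. dist (pdiffs \<beta> (f b) x) (pdiffs \<beta> (f c) x) \<le> e/2)"
    using ucall[OF len K] e2 unfolding ucauchy_def by blast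
  have "\<forall>b\<in>I. R a b \<longrightarrow> (\<forall>x\<in>K. dist (pdiffs \<beta> (f b) x) (G \<beta> x) < e)"
  proof (intro ballI impI)
    fix b x assume b: "b \<in> I" and rb: "R a b" and x: "x \<in> K"
    have lim: "((\<lambda>c. dist (pdiffs \<beta> (f b) x) (pdiffs \<beta> (f c) x)) \<longlongrightarrow> dist (pdiffs \<beta> (f b) x) (G \<beta> x)) (net_filter I R)"
      by (intro tendsto_dist tendsto_const G_lim[OF len]) (use x K in blast)
    have ev: "eventually (\<lambda>c. dist (pdiffs \<beta> (f b) x) (pdiffs \<beta> (f c) x) \<le> e/2) (net_filter I R)"
      unfolding ev_net[OF dir] using a ab b rb x by blast
    have "dist (pdiffs \<beta> (f b) x) (G \<beta> x) \<le> e/2"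
      using tendsto_upperbound[OF lim ev] net_ne[OF dir] by simp
    then show "dist (pdiffs \<beta> (f b) x) (G \<beta> x) < e" using e by linarith
  qed
  then show "\<forall>\<^sub>F n in net_filter I R. \<forall>x\<in>K. dist (pdiffs \<beta> (f n) x) (G \<beta> x) < e"
    unfolding ev_net[OF dir] using a by blast
qed

lemma G_cont:
  assumes len: "length \<beta> \<le> k"
  shows "continuous_on \<Omega> (G \<beta>)"
proof (rule continuous_at_imp_continuous_on, rule ballI)
  fix x assume x: "x \<in> \<Omega>"
  obtain r where r: "r > 0" "cball x r \<subseteq> \<Omega>" using opn x open_contains_cball by blast
  have "\<forall>\<^sub>F \<iota> in net_filter I R. continuous_on (cball x r) (pdiffs \<beta> (f \<iota>))"
    using net_in[OF dir] by eventually_elim (use hcont[OF _ len] r(2) continuous_on_subset in blast)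
  from uniform_limit_theorem[OF this G_unif[OF len compact_cball r(2)]]
  have "continuous_on (cball x r) (G \<beta>)" using net_ne[OF dir] by simp
  moreover have "x \<in> interior (cball x r)" using r(1) by simp
  ultimately show "isCont (G \<beta>) x" by (rule continuous_on_interior)
qed

lemma G_der:
  assumes len: "length (i#\<beta>) \<le> k" and x: "x \<in> \<Omega>"
  shows "((\<lambda>t. G \<beta> (x + t *\<^sub>R axis i 1)) has_vector_derivative G (i#\<beta>) x) (at 0)"
proof -
  have K: "compact {x}" "{x} \<subseteq> \<Omega>" using x by auto
  obtain \<delta> M where d: "0 < \<delta>" "\<delta> \<le> 1" "0 \<le> M" "\<And>z. z \<in> {x} \<Longrightarrow> cball z \<delta> \<subseteq> \<Omega>"
    and Mb: "\<And>\<iota> \<beta> z y. \<iota> \<in> I \<Longrightarrow> length \<beta> \<le> k \<Longrightarrow> z \<in> {x} \<Longrightarrow> dist z y \<le> \<delta> \<Longrightarrow>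
        norm (pdiffs \<beta> (f \<iota>) y - pdiffs \<beta> (f \<iota>) z) \<le> M * dist z y powr \<gamma>"
  proof -
    show thesis by (rule EQ[OF K]) (rule that)
  qed
  have lt: "length \<beta> < k" and le: "length \<beta> \<le> k" using len by auto
  have bound: "norm (G \<beta> (x + t *\<^sub>R axis i 1) - G \<beta> x - t *\<^sub>R G (i#\<beta>) x) \<le> \<bar>t\<bar> * (M * \<bar>t\<bar> powr \<gamma>)"
    if t: "\<bar>t\<bar> \<le> \<delta>" for t
  proof (rule lim_norm_le[OF dir])
    have xt: "x + t *\<^sub>R axis i 1 \<in> \<Omega>" using d(4)[of x] t by (auto simp: dist_norm)
    show "((\<lambda>\<iota>. pdiffs \<beta> (f \<iota>) (x + t *\<^sub>R axis i 1) - pdiffs \<beta> (f \<iota>) x - t *\<^sub>R pdiffs (i#\<beta>) (f \<iota>) x)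
        \<longlongrightarrow> G \<beta> (x + t *\<^sub>R axis i 1) - G \<beta> x - t *\<^sub>R G (i#\<beta>) x) (net_filter I R)"
      by (intro tendsto_diff tendsto_scaleR tendsto_const G_lim le len xt x)
    show "\<forall>b\<in>I. norm (pdiffs \<beta> (f b) (x + t *\<^sub>R axis i 1) - pdiffs \<beta> (f b) x - t *\<^sub>R pdiffs (i#\<beta>) (f b) x)
        \<le> \<bar>t\<bar> * (M * \<bar>t\<bar> powr \<gamma>)"
      using line_est[OF Mb d(4) d(3) _ lt _ t] by blast
  qed
  show ?thesis unfolding has_vector_derivative_def has_derivative_at_alt
  proof (intro conjI allI impI)
    show "bounded_linear (\<lambda>h. h *\<^sub>R G (i#\<beta>) x)" by (rule bounded_linear_scaleR_left)
    fix e :: real assume e: "e > 0"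
    define d where "d = min \<delta> ((e / (M + 1)) powr (1/\<gamma>))"
    have dpos: "d > 0" unfolding d_def using d(1) e d(3) by simp
    have "\<forall>y. norm (y - 0) < d \<longrightarrow>
      norm (G \<beta> (x + y *\<^sub>R axis i 1) - G \<beta> (x + 0 *\<^sub>R axis i 1) - (y - 0) *\<^sub>R G (i#\<beta>) x) \<le> e * norm (y - 0)"
    proof (intro allI impI)
      fix y :: real assume y: "norm (y - 0) < d"
      then have yd: "\<bar>y\<bar> \<le> \<delta>" "\<bar>y\<bar> \<le> (e / (M + 1)) powr (1/\<gamma>)" unfolding d_def by auto
      have "M * \<bar>y\<bar> powr \<gamma> \<le> e" by (rule small_powr) (use d(3) e gpos yd in auto)
      then have "\<bar>y\<bar> * (M * \<bar>y\<bar> powr \<gamma>) \<le> \<bar>y\<bar> * e" by (simp add: mult_left_mono)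
      then show "norm (G \<beta> (x + y *\<^sub>R axis i 1) - G \<beta> (x + 0 *\<^sub>R axis i 1) - (y - 0) *\<^sub>R G (i#\<beta>) x) \<le> e * norm (y - 0)"
        using bound[OF yd(1)] by (simp add: mult.commute)
    qed
    then show "\<exists>d>0. \<forall>y. norm (y - 0) < d \<longrightarrow>
      norm (G \<beta> (x + y *\<^sub>R axis i 1) - G \<beta> (x + 0 *\<^sub>R axis i 1) - (y - 0) *\<^sub>R G (i#\<beta>) x) \<le> e * norm (y - 0)"
      using dpos by blast
  qed
qed


definition g :: "real^'n \<Rightarrow> 'e" where "g = G []"

lemma line_transfer:
  assumes x: "x \<in> \<Omega>" and eq: "\<And>z. z \<in> \<Omega> \<Longrightarrow> h1 z = h2 z"
    and d: "((\<lambda>t. h1 (x + t *\<^sub>R axis i 1)) has_vector_derivative D) (at 0)"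
  shows "((\<lambda>t. h2 (x + t *\<^sub>R axis i 1)) has_vector_derivative D) (at 0)"
proof -
  obtain r where r: "r > 0" "ball x r \<subseteq> \<Omega>" using opn x open_contains_ball by blast
  show ?thesis
  proof (rule has_vector_derivative_transform_within_open[OF d open_ball])
    show "(0::real) \<in> ball 0 r" using r(1) by simp
    fix t :: real assume "t \<in> ball 0 r"
    then have "x + t *\<^sub>R axis i 1 \<in> ball x r" by (simp add: dist_norm)
    then show "h1 (x + t *\<^sub>R axis i 1) = h2 (x + t *\<^sub>R axis i 1)" using r(2) eq by blast
  qed
qed

lemma g_eq: "length \<beta> \<le> k \<Longrightarrow> x \<in> \<Omega> \<Longrightarrow> pdiffs \<beta> g x = G \<beta> x"
proof (induction \<beta> arbitrary: x)
  case Nil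
  then show ?case by (simp add: g_def)
next
  case (Cons i \<beta>)
  have eq: "\<And>z. z \<in> \<Omega> \<Longrightarrow> G \<beta> z = pdiffs \<beta> g z" using Cons.IH Cons.prems(1) by simp
  have "((\<lambda>t. pdiffs \<beta> g (x + t *\<^sub>R axis i 1)) has_vector_derivative G (i#\<beta>) x) (at 0)"
    by (rule line_transfer[OF Cons.prems(2) eq G_der[OF Cons.prems]])
  then show ?case by (simp add: pdiff_def vector_derivative_at)
qed

lemma g_Ck_aux: "\<forall>\<beta>. length \<beta> + m = k \<longrightarrow> Ck_on m \<Omega> (pdiffs \<beta> g)"
proof (induction m)
  case 0
  show ?case
  proof (intro allI impI)
    fix \<beta> :: "'n list" assume len: "length \<beta> + 0 = k"
    have "continuous_on \<Omega> (G \<beta>)" using G_cont len by simp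
    then have "continuous_on \<Omega> (pdiffs \<beta> g)"
      using continuous_on_cong[OF refl, of \<Omega> "pdiffs \<beta> g" "G \<beta>"] g_eq len by simp
    then show "Ck_on 0 \<Omega> (pdiffs \<beta> g)" by simp
  qed
next
  case (Suc m)
  show ?case
  proof (intro allI impI)
    fix \<beta> :: "'n list" assume len: "length \<beta> + Suc m = k"
    have le: "length \<beta> \<le> k" using len by simp
    have "continuous_on \<Omega> (G \<beta>)" using G_cont le by simp
    then have c: "continuous_on \<Omega> (pdiffs \<beta> g)"
      using continuous_on_cong[OF refl, of \<Omega> "pdiffs \<beta> g" "G \<beta>"] g_eq le by simp
    have d: "\<forall>i. \<forall>x\<in>\<Omega>. (\<lambda>t. pdiffs \<beta> g (x + t *\<^sub>R axis i 1)) differentiable (at 0)"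
    proof (intro allI ballI)
      fix i x assume x: "x \<in> \<Omega>"
      have len1: "length (i#\<beta>) \<le> k" using len by simp
      have eq: "\<And>z. z \<in> \<Omega> \<Longrightarrow> G \<beta> z = pdiffs \<beta> g z" using g_eq le by simp
      show "(\<lambda>t. pdiffs \<beta> g (x + t *\<^sub>R axis i 1)) differentiable (at 0)"
        by (rule differentiableI_vector, rule line_transfer[OF x eq G_der[OF len1 x]])
    qed
    have r: "\<forall>i. Ck_on m \<Omega> (pdiff i (pdiffs \<beta> g))"
    proof
      fix i
      have "length (i#\<beta>) + m = k" using len by simp
      then have "Ck_on m \<Omega> (pdiffs (i#\<beta>) g)" using Suc.IH by blast
      then show "Ck_on m \<Omega> (pdiff i (pdiffs \<beta> g))" by simp
    qed
    show "Ck_on (Suc m) \<Omega> (pdiffs \<beta> g)" using c d r by simp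
  qed
qed

lemma g_Ck: "Ck_on k \<Omega> g"
  using g_Ck_aux[of k] by (metis list.size(3) add_0 pdiffs.simps(1))

lemma g_holder:
  assumes K: "compact K" "K \<subseteq> \<Omega>" and C: "\<forall>\<iota>\<in>I. holder_bound k \<gamma> K (f \<iota>) C"
  shows "holder_bound k \<gamma> K g C"
  unfolding holder_bound_def
proof (intro conjI allI impI)
  fix \<beta> :: "'n list" and x assume len: "length \<beta> \<le> k" and x: "x \<in> K"
  have xO: "x \<in> \<Omega>" using x K by blast
  have "norm (G \<beta> x) \<le> C"
  proof (rule lim_norm_le[OF dir G_lim[OF len xO]])
    show "\<forall>b\<in>I. norm (pdiffs \<beta> (f b) x) \<le> C" using C len x unfolding holder_bound_def by blast
  qed
  then show "norm (pdiffs \<beta> g x) \<le> C" using g_eq[OF len xO] by simp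
next
  fix \<beta> :: "'n list" and x y assume len: "length \<beta> = k" and x: "x \<in> K" and y: "y \<in> K" and xy: "x \<noteq> y"
  have le: "length \<beta> \<le> k" using len by simp
  have xO: "x \<in> \<Omega>" and yO: "y \<in> \<Omega>" using x y K by auto
  have "norm (G \<beta> x - G \<beta> y) \<le> C * dist x y powr \<gamma>"
  proof (rule lim_norm_le[OF dir tendsto_diff[OF G_lim[OF le xO] G_lim[OF le yO]]])
    show "\<forall>b\<in>I. norm (pdiffs \<beta> (f b) x - pdiffs \<beta> (f b) y) \<le> C * dist x y powr \<gamma>"
      using C len x y xy unfolding holder_bound_def by blast
  qed
  then show "norm (pdiffs \<beta> g x - pdiffs \<beta> g y) \<le> C * dist x y powr \<gamma>"
    using g_eq[OF le xO] g_eq[OF le yO] by simp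
qed

lemma g_result:
  "Ck_gamma_loc k \<gamma> \<Omega> g \<and>
    (\<forall>K \<beta>. compact K \<longrightarrow> K \<subseteq> \<Omega> \<longrightarrow> length \<beta> \<le> k \<longrightarrow>
       uniform_limit K (\<lambda>\<iota>. pdiffs \<beta> (f \<iota>)) (pdiffs \<beta> g) (net_filter I R))"
proof (intro conjI allI impI)
  show "Ck_gamma_loc k \<gamma> \<Omega> g"
    unfolding Ck_gamma_loc_def
  proof (intro conjI allI impI)
    show "Ck_on k \<Omega> g" by (rule g_Ck)
    fix K :: "(real^'n) set" assume K: "compact K \<and> K \<subseteq> \<Omega>"
    then obtain C where C: "\<forall>\<iota>\<in>I. holder_bound k \<gamma> K (f \<iota>) C" using bnd by blast
    have "holder_bound k \<gamma> K g C" using K C by (intro g_holder) auto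
    then show "\<exists>C. holder_bound k \<gamma> K g C" by blast
  qed
  fix K :: "(real^'n) set" and \<beta> :: "'n list" assume K: "compact K" "K \<subseteq> \<Omega>" and len: "length \<beta> \<le> k"
  have "uniform_limit K (\<lambda>\<iota>. pdiffs \<beta> (f \<iota>)) (G \<beta>) (net_filter I R)" by (rule G_unif[OF len K])
  moreover have "\<And>x. x \<in> K \<Longrightarrow> G \<beta> x = pdiffs \<beta> g x" using g_eq[OF len] K by auto
  ultimately show "uniform_limit K (\<lambda>\<iota>. pdiffs \<beta> (f \<iota>)) (pdiffs \<beta> g) (net_filter I R)"
    using uniform_limit_cong'[of K "\<lambda>\<iota>. pdiffs \<beta> (f \<iota>)" "\<lambda>\<iota>. pdiffs \<beta> (f \<iota>)" "G \<beta>" "pdiffs \<beta> g"] by simp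
qed

end


theorem mainTheorem15:
  fixes \<Omega> :: "(real^'n::finite) set"
    and f :: "'i \<Rightarrow> real^'n \<Rightarrow> 'e::banach"
    and I :: "'i set" and R :: "'i \<Rightarrow> 'i \<Rightarrow> bool"
    and k :: nat and \<gamma> :: real
  assumes "open \<Omega>"
    and "0 < \<gamma>" and "\<gamma> \<le> 1"
    and "directed_set I R"
    and "\<forall>\<iota>\<in>I. Ck_gamma_loc k \<gamma> \<Omega> (f \<iota>)"
    and "\<forall>K. compact K \<and> K \<subseteq> \<Omega> \<longrightarrow> (\<exists>C. \<forall>\<iota>\<in>I. holder_bound k \<gamma> K (f \<iota>) C)"
    and "(\<exists>U. U \<subseteq> \<Omega> \<and> \<Omega> \<subseteq> closure U \<and>
            (\<forall>x\<in>U. \<exists>l. ((\<lambda>\<iota>. f \<iota> x) \<longlongrightarrow> l) (net_filter I R)))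
       \<or> (k \<ge> 1 \<and> connected \<Omega> \<and>
          (\<exists>U. U \<subseteq> \<Omega> \<and> \<Omega> \<subseteq> closure U \<and>
            (\<forall>n. \<forall>x\<in>U. \<exists>l. ((\<lambda>\<iota>. pdiff n (f \<iota>) x) \<longlongrightarrow> l) (net_filter I R))) \<and>
          (\<exists>x0\<in>\<Omega>. \<exists>l. ((\<lambda>\<iota>. f \<iota> x0) \<longlongrightarrow> l) (net_filter I R)))"
  shows "\<exists>g. Ck_gamma_loc k \<gamma> \<Omega> g \<and>
           (\<forall>K \<beta>. compact K \<longrightarrow> K \<subseteq> \<Omega> \<longrightarrow> length \<beta> \<le> k \<longrightarrow>
              uniform_limit K (\<lambda>\<iota>. pdiffs \<beta> (f \<iota>)) (pdiffs \<beta> g) (net_filter I R))"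
proof -
  have hs: "hsetup \<Omega> f I R k \<gamma>"
    by (rule hsetup.intro) (fact assms)+
  interpret H: hsetup \<Omega> f I R k \<gamma> by (fact hs)
  have base: "H.ucauchy K []" if K: "compact K" "K \<subseteq> \<Omega>" for K
    using assms(7)
  proof
    assume "\<exists>U. U \<subseteq> \<Omega> \<and> \<Omega> \<subseteq> closure U \<and> (\<forall>x\<in>U. \<exists>l. ((\<lambda>\<iota>. f \<iota> x) \<longlongrightarrow> l) (net_filter I R))"
    then obtain U where UU: "U \<subseteq> \<Omega> \<and> \<Omega> \<subseteq> closure U \<and> (\<forall>x\<in>U. \<exists>l. ((\<lambda>\<iota>. f \<iota> x) \<longlongrightarrow> l) (net_filter I R))" ..
    note U = conjunct1[OF UU] conjunct1[OF conjunct2[OF UU]]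
    note l = conjunct2[OF conjunct2[OF UU]]
    have pc: "H.ucauchy {x} []" if xU: "x \<in> U" for x
    proof -
      obtain l where "((\<lambda>\<iota>. f \<iota> x) \<longlongrightarrow> l) (net_filter I R)" using bspec[OF l xU] ..
      then have "((\<lambda>\<iota>. pdiffs [] (f \<iota>) x) \<longlongrightarrow> l) (net_filter I R)" by simp
      then show ?thesis by (rule H.pt_uc)
    qed
    show "H.ucauchy K []" by (rule H.uc_dense[OF _ U pc K]) simp
  next
    assume ii: "k \<ge> 1 \<and> connected \<Omega> \<and>
          (\<exists>U. U \<subseteq> \<Omega> \<and> \<Omega> \<subseteq> closure U \<and>
            (\<forall>n. \<forall>x\<in>U. \<exists>l. ((\<lambda>\<iota>. pdiff n (f \<iota>) x) \<longlongrightarrow> l) (net_filter I R))) \<and>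
          (\<exists>x0\<in>\<Omega>. \<exists>l. ((\<lambda>\<iota>. f \<iota> x0) \<longlongrightarrow> l) (net_filter I R))"
    note k1 = conjunct1[OF ii] and conn = conjunct1[OF conjunct2[OF ii]]
      and ex1 = conjunct1[OF conjunct2[OF conjunct2[OF ii]]] and ex2 = conjunct2[OF conjunct2[OF conjunct2[OF ii]]]
    from ex1 obtain U where UU: "U \<subseteq> \<Omega> \<and> \<Omega> \<subseteq> closure U \<and>
            (\<forall>n. \<forall>x\<in>U. \<exists>l. ((\<lambda>\<iota>. pdiff n (f \<iota>) x) \<longlongrightarrow> l) (net_filter I R))" ..
    note U = conjunct1[OF UU] conjunct1[OF conjunct2[OF UU]]
    note l = conjunct2[OF conjunct2[OF UU]]
    from ex2 obtain x0 where x0a: "x0 \<in> \<Omega>" and x0b: "\<exists>l. ((\<lambda>\<iota>. f \<iota> x0) \<longlongrightarrow> l) (net_filter I R)" ..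
    from x0b obtain l0 where x0c: "((\<lambda>\<iota>. f \<iota> x0) \<longlongrightarrow> l0) (net_filter I R)" ..
    note x0 = x0a x0c
    have der: "H.ucauchy K' [n]" if K': "compact K'" "K' \<subseteq> \<Omega>" for n K'
    proof -
      have pc: "H.ucauchy {x} [n]" if xU: "x \<in> U" for x
      proof -
        obtain l where "((\<lambda>\<iota>. pdiff n (f \<iota>) x) \<longlongrightarrow> l) (net_filter I R)" using bspec[OF spec[OF l, of n] xU] ..
        then have "((\<lambda>\<iota>. pdiffs [n] (f \<iota>) x) \<longlongrightarrow> l) (net_filter I R)" by simp
        then show ?thesis by (rule H.pt_uc)
      qed
      show ?thesis by (rule H.uc_dense[OF _ U pc K']) (use k1 in simp)
    qed
    have x0u: "H.ucauchy {x0} []"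
      by (rule H.pt_uc[of "[]" x0 l0]) (use x0(2) in simp)
    have all: "H.ucauchy {x} []" if "x \<in> \<Omega>" for x
      by (rule H.uc_conn[OF k1 conn der x0(1) x0u that])
    show "H.ucauchy K []"
      by (rule H.uc_dense[OF _ order_refl closure_subset all K]) simp
  qed
  have UC: "\<And>\<beta> K. length \<beta> \<le> k \<Longrightarrow> compact K \<Longrightarrow> K \<subseteq> \<Omega> \<Longrightarrow> H.ucauchy K \<beta>"
    by (rule H.uc_all[OF base])
  have hf: "hfull \<Omega> f I R k \<gamma>"
    by (rule hfull.intro[OF hs], rule hfull_axioms.intro, rule UC)
  interpret F: hfull \<Omega> f I R k \<gamma> by (fact hf)
  show ?thesis by (rule exI[of _ F.g], rule F.g_result)
qed

end
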